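(* Let $\mathcal{C}$ be the Cesàro operator $\mathcal{C}(x)=\big(\frac1n\sum_{i=1}^n x_i\big)_n$. Fix $1\le p<\infty$ and $1<q,r<\infty$, and let $T\colon\ell^p\to\ell^q$ be a nontrivial continuous linear operator with matrix $a_{ij}=T(e^j)_i$. Let $h=(h_j)\in\ell^{s_{pr}}$ with $h_1\ne0$. The following are equivalent: (a) $T$ factors strongly through $\mathcal{C}$ and $M_h$, i.e. there exists $g\in\ell^{s_{rq}}$ such that $T(x)=g\,\mathcal{C}(hx)$ for all $x\in\ell^p$. (b) $a_{ij}=0$ for $j>i$, $a_{ij}=h_ja_{i1}/h_1$ for $j\le i$, and $(ia_{i1})_i\in\ell^{s_{rq}}$. (c) There is a real sequence $(\alpha_n)$ with $(n\alpha_n)_n\in\ell^{s_{rq}}$ such that $a_{ij}=h_j\alpha_i$ for $j\le i$ and $a_{ij}=0$ for $j>i$.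
   Context: $(e^n)$ denotes the standard unit vectors. For exponents $1\le a,b\le\infty$, $s_{ab}=\frac{ab}{a-b}$ if $1\le b<a<\infty$; $s_{ab}=b$ if $1\le b<a=\infty$; $s_{ab}=\infty$ if $1\le a\le b\le\infty$. Products of sequences are coordinatewise. $\mathcal{C}$ is bounded on $\ell^r$ for $1<r<\infty$. *)

theory Defs
  imports "HOL-Analysis.Analysis"
begin

text \<open>Sequences are real sequences indexed from 0 (paper index n corresponds to n - 1).\<close>

definition lp :: "ereal \<Rightarrow> (nat \<Rightarrow> real) set" where
  "lp p = {x. if p = \<infinity> then bounded (range x)
              else summable (\<lambda>n. \<bar>x n\<bar> powr real_of_ereal p)}"

definition lpnorm :: "real \<Rightarrow> (nat \<Rightarrow> real) \<Rightarrow> real" where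
  "lpnorm p x = (\<Sum>n. \<bar>x n\<bar> powr p) powr (1 / p)"

definition s_exp :: "ereal \<Rightarrow> ereal \<Rightarrow> ereal" where
  "s_exp a b = (if b < a \<and> a < \<infinity> then a * b / (a - b)
                else if b < a \<and> a = \<infinity> then b else \<infinity>)"

definition unitvec :: "nat \<Rightarrow> nat \<Rightarrow> real" where
  "unitvec j = (\<lambda>i. if i = j then 1 else 0)"

definition cesaro :: "(nat \<Rightarrow> real) \<Rightarrow> nat \<Rightarrow> real" where
  "cesaro x = (\<lambda>n. (\<Sum>i\<le>n. x i) / real (n + 1))"

definition bounded_linear_lp :: "real \<Rightarrow> real \<Rightarrow> ((nat \<Rightarrow> real) \<Rightarrow> (nat \<Rightarrow> real)) \<Rightarrow> bool" where
  "bounded_linear_lp p q T \<longleftrightarrow>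
     (\<forall>x\<in>lp (ereal p). T x \<in> lp (ereal q)) \<and>
     (\<forall>x\<in>lp (ereal p). \<forall>y\<in>lp (ereal p). T (\<lambda>n. x n + y n) = (\<lambda>n. T x n + T y n)) \<and>
     (\<forall>c. \<forall>x\<in>lp (ereal p). T (\<lambda>n. c * x n) = (\<lambda>n. c * T x n)) \<and>
     (\<exists>K. \<forall>x\<in>lp (ereal p). lpnorm q (T x) \<le> K * lpnorm p x)"

end

theory Submission
  imports Defs
begin

lemma lp_scale:
  assumes "x \<in> lp e" shows "(\<lambda>n. c * x n) \<in> lp e"
proof (cases "e = \<infinity>")
  case True
  have "range (\<lambda>n. c * x n) = (\<lambda>y. c *\<^sub>R y) ` range x" by auto
  then show ?thesis using assms True bounded_scaling[of "range x" c] by (simp add: lp_def)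
next
  case False
  let ?s = "real_of_ereal e"
  have "summable (\<lambda>n. \<bar>x n\<bar> powr ?s)" using assms False by (simp add: lp_def)
  then have "summable (\<lambda>n. \<bar>c\<bar> powr ?s * \<bar>x n\<bar> powr ?s)" by (rule summable_mult)
  moreover have "\<bar>c * x n\<bar> powr ?s = \<bar>c\<bar> powr ?s * \<bar>x n\<bar> powr ?s" for n
    by (simp add: abs_mult powr_mult)
  ultimately show ?thesis using False by (simp add: lp_def)
qed

lemma lp_finite:
  assumes "\<forall>n\<ge>N. y n = 0" shows "y \<in> lp (ereal p)"
proof -
  have "summable (\<lambda>n. \<bar>y n\<bar> powr p)"
    by (rule summable_finite[of "{..<N}"]) (use assms in auto)
  then show ?thesis by (simp add: lp_def)
qed

lemma coord_bound:
  assumes "y \<in> lp (ereal q)" "0 < q" shows "\<bar>y i\<bar> \<le> lpnorm q y"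
proof -
  have s: "summable (\<lambda>n. \<bar>y n\<bar> powr q)" using assms by (simp add: lp_def)
  have "sum (\<lambda>n. \<bar>y n\<bar> powr q) {i} \<le> (\<Sum>n. \<bar>y n\<bar> powr q)"
    by (rule sum_le_suminf[OF s]) auto
  then have "\<bar>y i\<bar> powr q \<le> (\<Sum>n. \<bar>y n\<bar> powr q)" by simp
  then have "(\<bar>y i\<bar> powr q) powr (1/q) \<le> (\<Sum>n. \<bar>y n\<bar> powr q) powr (1/q)"
    using assms by (intro powr_mono2) auto
  moreover have "(\<bar>y i\<bar> powr q) powr (1/q) = \<bar>y i\<bar>" using assms by (simp add: powr_powr)
  ultimately show ?thesis by (simp add: lpnorm_def)
qed

lemma tail_norm:
  assumes "x \<in> lp (ereal p)" "0 < p"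
  shows "(\<lambda>N. lpnorm p (\<lambda>n. if n < N then 0 else x n)) \<longlonglongrightarrow> 0"
proof -
  define f where "f n = \<bar>x n\<bar> powr p" for n
  have s: "summable f" using assms unfolding f_def by (simp add: lp_def)
  have eq: "(\<Sum>n. \<bar>if n < N then 0 else x n\<bar> powr p) = (\<Sum>n. f n) - (\<Sum>i<N. f i)" for N
  proof -
    have s2: "summable (\<lambda>n. \<bar>if n < N then 0 else x n\<bar> powr p)"
      by (rule summable_comparison_test[OF _ s]) (auto simp: f_def)
    have "(\<Sum>n. \<bar>if n < N then 0 else x n\<bar> powr p) =
       (\<Sum>n. \<bar>if n + N < N then 0 else x (n + N)\<bar> powr p) + (\<Sum>i<N. \<bar>if i < N then 0 else x i\<bar> powr p)"
      by (rule suminf_split_initial_segment[OF s2])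
    also have "\<dots> = (\<Sum>n. f (n + N))" by (simp add: f_def)
    also have "\<dots> = (\<Sum>n. f n) - (\<Sum>i<N. f i)" by (rule suminf_minus_initial_segment[OF s])
    finally show ?thesis .
  qed
  have "(\<lambda>N. (\<Sum>n. f n) - (\<Sum>i<N. f i)) \<longlonglongrightarrow> (\<Sum>n. f n) - (\<Sum>n. f n)"
    by (intro tendsto_intros summable_LIMSEQ s)
  then have l: "(\<lambda>N. (\<Sum>n. \<bar>if n < N then 0 else x n\<bar> powr p)) \<longlonglongrightarrow> 0" by (simp add: eq)
  have "(\<lambda>N. (\<Sum>n. \<bar>if n < N then 0 else x n\<bar> powr p) powr (1/p)) \<longlonglongrightarrow> 0"
    by (rule tendsto_zero_powrI[OF l tendsto_const]) (use assms eq s in \<open>auto intro!: always_eventually sum_le_suminf simp: f_def lp_def\<close>)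
  then show ?thesis by (simp add: lpnorm_def)
qed

lemma rep:
  assumes p: "0 < p" and q: "0 < q" and T: "bounded_linear_lp p q T"
    and low: "\<forall>i j. i < j \<longrightarrow> T (unitvec j) i = 0"
    and x: "x \<in> lp (ereal p)"
  shows "T x i = (\<Sum>j\<le>i. T (unitvec j) i * x j)"
proof -
  have img: "\<And>y. y \<in> lp (ereal p) \<Longrightarrow> T y \<in> lp (ereal q)"
    and add: "\<And>y z. y \<in> lp (ereal p) \<Longrightarrow> z \<in> lp (ereal p) \<Longrightarrow> T (\<lambda>n. y n + z n) = (\<lambda>n. T y n + T z n)"
    and scl: "\<And>c y. y \<in> lp (ereal p) \<Longrightarrow> T (\<lambda>n. c * y n) = (\<lambda>n. c * T y n)"
    using T unfolding bounded_linear_lp_def by blast+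
  obtain K where K: "\<And>y. y \<in> lp (ereal p) \<Longrightarrow> lpnorm q (T y) \<le> K * lpnorm p y"
    using T unfolding bounded_linear_lp_def by blast
  define tr where "tr N = (\<lambda>n. if n < N then x n else 0)" for N
  define tl where "tl N = (\<lambda>n. if n < N then 0 else x n)" for N
  have trlp: "tr N \<in> lp (ereal p)" for N by (rule lp_finite[of N]) (auto simp: tr_def)
  have tllp: "tl N \<in> lp (ereal p)" for N
  proof -
    have "summable (\<lambda>n. \<bar>x n\<bar> powr p)" using x p by (simp add: lp_def)
    then have "summable (\<lambda>n. \<bar>tl N n\<bar> powr p)"
      by (rule summable_comparison_test[rotated]) (auto simp: tl_def)
    then show ?thesis using p by (simp add: lp_def)
  qed
  have ulp: "unitvec j \<in> lp (ereal p)" for j by (rule lp_finite[of "Suc j"]) (auto simp: unitvec_def)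
  have z: "(\<lambda>n::nat. 0::real) \<in> lp (ereal p)" by (rule lp_finite[of 0]) auto
  have T0: "T (\<lambda>n. 0) = (\<lambda>n. 0)"
    using scl[OF z, of 0] by simp
  have Ttr: "T (tr N) = (\<lambda>n. \<Sum>j<N. x j * T (unitvec j) n)" for N
  proof (induction N)
    case 0
    have "tr 0 = (\<lambda>n. 0)" by (simp add: tr_def)
    then show ?case using T0 by simp
  next
    case (Suc N)
    have e: "tr (Suc N) = (\<lambda>n. tr N n + (\<lambda>n. x N * unitvec N n) n)"
      by (rule ext) (auto simp: tr_def unitvec_def less_Suc_eq)
    have "T (tr (Suc N)) = (\<lambda>n. T (tr N) n + T (\<lambda>n. x N * unitvec N n) n)"
      unfolding e by (rule add[OF trlp lp_scale[OF ulp]])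
    also have "\<dots> = (\<lambda>n. \<Sum>j<Suc N. x j * T (unitvec j) n)"
      using Suc.IH scl[OF ulp, of "x N" N] by simp
    finally show ?case .
  qed
  have split: "T x = (\<lambda>n. T (tr N) n + T (tl N) n)" for N
  proof -
    have "x = (\<lambda>n. tr N n + tl N n)" by (auto simp: tr_def tl_def)
    then have "T x = T (\<lambda>n. tr N n + tl N n)" by simp
    also have "\<dots> = (\<lambda>n. T (tr N) n + T (tl N) n)" by (rule add[OF trlp tllp])
    finally show ?thesis .
  qed
  define S where "S = (\<Sum>j\<le>i. T (unitvec j) i * x j)"
  have trS: "T (tr N) i = S" if "i < N" for N
  proof -
    have "T (tr N) i = (\<Sum>j<N. x j * T (unitvec j) i)" by (simp add: Ttr)
    also have "\<dots> = (\<Sum>j\<le>i. x j * T (unitvec j) i)"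
      by (rule sum.mono_neutral_right) (use that low in auto)
    finally show ?thesis by (simp add: S_def mult.commute)
  qed
  have bnd: "\<bar>T x i - S\<bar> \<le> K * lpnorm p (tl N)" if "i < N" for N
  proof -
    have "T x i - S = T (tl N) i" using split[of N] trS[OF that] by (metis add_diff_cancel_left')
    also have "\<bar>\<dots>\<bar> \<le> lpnorm q (T (tl N))" by (rule coord_bound[OF img[OF tllp] q])
    also have "\<dots> \<le> K * lpnorm p (tl N)" by (rule K[OF tllp])
    finally show ?thesis .
  qed
  have lim: "(\<lambda>N. K * lpnorm p (tl N)) \<longlonglongrightarrow> K * 0"
    by (intro tendsto_intros) (use tail_norm[OF x p] in \<open>simp add: tl_def\<close>)
  have "\<bar>T x i - S\<bar> \<le> K * 0"
    by (rule LIMSEQ_le_const[OF lim]) (use bnd in \<open>auto intro!: exI[of _ "Suc i"]\<close>)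
  then show ?thesis by (simp add: S_def)
qed

lemma aux: "(c::real) \<noteq> 0 \<Longrightarrow> (u * (c * v)) * (S / c) = (v * u) * S"
  by simp

lemma ces_unit: "cesaro (\<lambda>i. h i * unitvec j i) n = (if j \<le> n then h j / real (n + 1) else 0)"
  by (simp add: cesaro_def unitvec_def if_distrib[of "\<lambda>t. h _ * t"] cong: if_cong)

theorem proposition5p4:
  fixes p q r :: real
    and T :: "(nat \<Rightarrow> real) \<Rightarrow> (nat \<Rightarrow> real)"
    and h :: "nat \<Rightarrow> real"
  assumes "1 \<le> p" and "1 < q" and "1 < r"
    and "bounded_linear_lp p q T"
    and "\<exists>x\<in>lp (ereal p). T x \<noteq> (\<lambda>n. 0)"
    and "h \<in> lp (s_exp (ereal p) (ereal r))"
    and "h 0 \<noteq> 0"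
  defines "a \<equiv> (\<lambda>i j. T (unitvec j) i)"
  shows "((\<exists>g \<in> lp (s_exp (ereal r) (ereal q)).
             \<forall>x\<in>lp (ereal p). T x = (\<lambda>n. g n * cesaro (\<lambda>i. h i * x i) n))
          \<longleftrightarrow>
          ((\<forall>i j. i < j \<longrightarrow> a i j = 0) \<and>
           (\<forall>i j. j \<le> i \<longrightarrow> a i j = h j * a i 0 / h 0) \<and>
           (\<lambda>i. real (i + 1) * a i 0) \<in> lp (s_exp (ereal r) (ereal q))))
       \<and>
         (((\<forall>i j. i < j \<longrightarrow> a i j = 0) \<and>
           (\<forall>i j. j \<le> i \<longrightarrow> a i j = h j * a i 0 / h 0) \<and>
           (\<lambda>i. real (i + 1) * a i 0) \<in> lp (s_exp (ereal r) (ereal q)))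
          \<longleftrightarrow>
          (\<exists>\<alpha> :: nat \<Rightarrow> real. (\<lambda>n. real (n + 1) * \<alpha> n) \<in> lp (s_exp (ereal r) (ereal q)) \<and>
             (\<forall>i j. j \<le> i \<longrightarrow> a i j = h j * \<alpha> i) \<and>
             (\<forall>i j. i < j \<longrightarrow> a i j = 0)))"
proof -
  let ?L = "lp (s_exp (ereal r) (ereal q))"
  let ?B = "(\<forall>i j. i < j \<longrightarrow> a i j = 0) \<and>
           (\<forall>i j. j \<le> i \<longrightarrow> a i j = h j * a i 0 / h 0) \<and>
           (\<lambda>i. real (i + 1) * a i 0) \<in> ?L"
  have ulp: "unitvec j \<in> lp (ereal p)" for j by (rule lp_finite[of "Suc j"]) (auto simp: unitvec_def)
  have AB: ?B if g: "g \<in> ?L" "\<forall>x\<in>lp (ereal p). T x = (\<lambda>n. g n * cesaro (\<lambda>i. h i * x i) n)" for g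
  proof -
    have aij: "a i j = g i * (if j \<le> i then h j / real (i + 1) else 0)" for i j
      using g(2) ulp[of j] by (simp add: a_def ces_unit)
    have "(\<lambda>i. real (i + 1) * a i 0) = (\<lambda>i. h 0 * g i)"
      by (rule ext) (simp add: aij)
    then have "(\<lambda>i. real (i + 1) * a i 0) \<in> ?L" using lp_scale[OF g(1), of "h 0"] by simp
    moreover have "\<forall>i j. j \<le> i \<longrightarrow> a i j = h j * a i 0 / h 0" using assms(7) by (simp add: aij)
    moreover have "\<forall>i j. i < j \<longrightarrow> a i j = 0" by (simp add: aij)
    ultimately show ?thesis by blast
  qed
  have BA: "\<exists>g \<in> ?L. \<forall>x\<in>lp (ereal p). T x = (\<lambda>n. g n * cesaro (\<lambda>i. h i * x i) n)" if B: ?B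
  proof -
    define g where "g = (\<lambda>i. (1 / h 0) * (real (i + 1) * a i 0))"
    have "g \<in> ?L" unfolding g_def using B by (intro lp_scale) blast
    moreover have "T x = (\<lambda>n. g n * cesaro (\<lambda>i. h i * x i) n)" if x: "x \<in> lp (ereal p)" for x
    proof
      fix n
      have low: "\<forall>i j. i < j \<longrightarrow> T (unitvec j) i = 0" using B unfolding a_def by blast
      have "T x n = (\<Sum>j\<le>n. a n j * x j)"
        unfolding a_def by (rule rep[OF _ _ assms(4) low x]) (use assms(1,2) in auto)
      also have "\<dots> = (\<Sum>j\<le>n. (a n 0 / h 0) * (h j * x j))"
      proof (intro sum.cong refl)
        fix j assume "j \<in> {..n}"
        then have "a n j = h j * a n 0 / h 0" using B by blast
        then show "a n j * x j = (a n 0 / h 0) * (h j * x j)" by simp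
      qed
      also have "\<dots> = (a n 0 / h 0) * (\<Sum>j\<le>n. h j * x j)"
        by (rule sum_distrib_left[symmetric])
      also have "\<dots> = (a n 0 * (1 / h 0)) * (\<Sum>j\<le>n. h j * x j)" by simp
      also have "\<dots> = (1 / h 0 * (real (n + 1) * a n 0)) * ((\<Sum>j\<le>n. h j * x j) / real (n + 1))"
        by (rule aux[symmetric]) simp
      also have "\<dots> = g n * cesaro (\<lambda>i. h i * x i) n"
        unfolding g_def cesaro_def by (rule refl)
      finally show "T x n = g n * cesaro (\<lambda>i. h i * x i) n" .
    qed
    ultimately show ?thesis by blast
  qed
  have BC: "?B \<longleftrightarrow> (\<exists>\<alpha> :: nat \<Rightarrow> real. (\<lambda>n. real (n + 1) * \<alpha> n) \<in> ?L \<and>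
             (\<forall>i j. j \<le> i \<longrightarrow> a i j = h j * \<alpha> i) \<and>
             (\<forall>i j. i < j \<longrightarrow> a i j = 0))"
  proof
    assume B: ?B
    define \<alpha> where "\<alpha> = (\<lambda>i. a i 0 / h 0)"
    have eq: "(\<lambda>n. real (n + 1) * \<alpha> n) = (\<lambda>n. (1 / h 0) * (real (n + 1) * a n 0))"
      by (simp add: \<alpha>_def)
    have "(\<lambda>n. real (n + 1) * a n 0) \<in> ?L" using B by blast
    then have "(\<lambda>n. (1 / h 0) * (real (n + 1) * a n 0)) \<in> ?L" by (rule lp_scale)
    then have "(\<lambda>n. real (n + 1) * \<alpha> n) \<in> ?L" unfolding eq .
    then show "\<exists>\<alpha> :: nat \<Rightarrow> real. (\<lambda>n. real (n + 1) * \<alpha> n) \<in> ?L \<and>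
             (\<forall>i j. j \<le> i \<longrightarrow> a i j = h j * \<alpha> i) \<and> (\<forall>i j. i < j \<longrightarrow> a i j = 0)"
    proof (intro exI[of _ \<alpha>] conjI allI impI)
      fix i j :: nat assume "j \<le> i"
      then have "a i j = h j * a i 0 / h 0" using B by blast
      then show "a i j = h j * \<alpha> i" by (simp add: \<alpha>_def)
    next
      fix i j :: nat assume "i < j"
      then show "a i j = 0" using B by blast
    qed assumption
  next
    assume "\<exists>\<alpha> :: nat \<Rightarrow> real. (\<lambda>n. real (n + 1) * \<alpha> n) \<in> ?L \<and>
             (\<forall>i j. j \<le> i \<longrightarrow> a i j = h j * \<alpha> i) \<and> (\<forall>i j. i < j \<longrightarrow> a i j = 0)"
    then obtain \<alpha> where al: "(\<lambda>n. real (n + 1) * \<alpha> n) \<in> ?L"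
      "\<forall>i j. j \<le> i \<longrightarrow> a i j = h j * \<alpha> i" "\<forall>i j. i < j \<longrightarrow> a i j = 0" by blast
    have a0: "a i 0 = h 0 * \<alpha> i" for i using al(2) by simp
    have eq2: "(\<lambda>i. real (i + 1) * a i 0) = (\<lambda>i. h 0 * (real (i + 1) * \<alpha> i))"
      by (simp add: a0 ac_simps)
    have "(\<lambda>i. real (i + 1) * a i 0) \<in> ?L" unfolding eq2 by (rule lp_scale[OF al(1)])
    moreover have "\<forall>i j. j \<le> i \<longrightarrow> a i j = h j * a i 0 / h 0"
      using al(2) assms(7) by (simp add: a0)
    ultimately show ?B using al(3) by blast
  qed
  show ?thesis using AB BA BC by blast
qed

end
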